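(* Let $\Gamma,\Delta$ be finitely generated groups with free continuous actions on compact metric spaces $Y$ and $X$ respectively, and let $f:Y\to X$ be a bijection (not necessarily continuous) inducing a quasi-isometry of warped cones, i.e. there are an index set $I$, maps $i\mapsto t_i$ and $i\mapsto\tau_i$ from $I$ onto $(0,\infty)$, and $C\ge1,A\ge0$ such that each $f:(t_iY,d_\Gamma)\to(\tau_iX,d_\Delta)$ is a $(C,A)$-quasi-isometry. Then there is a cocycle $\delta:\Gamma\times Y\to\Delta$ (i.e. $\delta(\gamma_2,\gamma_1y)\delta(\gamma_1,y)=\delta(\gamma_2\gamma_1,y)$) such that for each fixed $y$ the map $\gamma\mapsto\delta(\gamma,y)$ is a bijection $\Gamma\to\Delta$, and there are $C'\ge1$, $A'\ge0$ with $C'^{-1}|\gamma|-A'\le|\delta(\gamma,y)|\le C'|\gamma|+A'$ for all $\gamma,y$. In particular, $\Gamma$ and $\Delta$ are bijectively quasi-isometric.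
   Context: $|\cdot|$ is word length with respect to fixed finite symmetric generating sets. For a compact metric space $(Y,d)$ with a $\Gamma$-action and $t>0$, $tY$ is $Y$ with metric $td$ and $d_\Gamma$ is the largest metric on $tY$ with $d_\Gamma\le td$ and $d_\Gamma(y,sy)\le1$ for generators $s$. A $(C,A)$-quasi-isometry $g:Z\to W$ satisfies $C^{-1}d(z,z')-A\le d(g(z),g(z'))\le Cd(z,z')+A$ and the $A$-neighbourhood of $g(Z)$ equals $W$. *)

theory Defs
  imports "HOL-Analysis.Analysis" "HOL-Algebra.Group_Action" "HOL-Algebra.Generated_Groups"
begin

definition fin_sym_gen_set :: "('g, 'b) monoid_scheme \<Rightarrow> 'g set \<Rightarrow> bool" where
  "fin_sym_gen_set G S \<longleftrightarrow> finite S \<and> S \<subseteq> carrier G \<and>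
     (\<forall>s\<in>S. inv\<^bsub>G\<^esub> s \<in> S) \<and> generate G S = carrier G"

definition word_length :: "('g, 'b) monoid_scheme \<Rightarrow> 'g set \<Rightarrow> 'g \<Rightarrow> nat" where
  "word_length G S g =
     (LEAST n. \<exists>ws. set ws \<subseteq> S \<and> length ws = n \<and> foldr (\<otimes>\<^bsub>G\<^esub>) ws \<one>\<^bsub>G\<^esub> = g)"

definition is_metric :: "('a \<Rightarrow> 'a \<Rightarrow> real) \<Rightarrow> bool" where
  "is_metric \<rho> \<longleftrightarrow> (\<forall>a b. 0 \<le> \<rho> a b) \<and> (\<forall>a b. \<rho> a b = 0 \<longleftrightarrow> a = b) \<and>
     (\<forall>a b. \<rho> a b = \<rho> b a) \<and> (\<forall>a b c. \<rho> a c \<le> \<rho> a b + \<rho> b c)"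

text \<open>Warped metric d_Gamma on tY: the largest metric with d_Gamma \<le> t d and
  d_Gamma(y, s y) \<le> 1 for all generators s (pointwise supremum of all such metrics).\<close>
definition warped_dist :: "'g set \<Rightarrow> ('g \<Rightarrow> 'y \<Rightarrow> 'y) \<Rightarrow> real \<Rightarrow> 'y::metric_space \<Rightarrow> 'y \<Rightarrow> real" where
  "warped_dist S \<phi> t y y' =
     Sup {\<rho> y y' | \<rho>. is_metric \<rho> \<and> (\<forall>a b. \<rho> a b \<le> t * dist a b) \<and>
                        (\<forall>s\<in>S. \<forall>a. \<rho> a (\<phi> s a) \<le> 1)}"

definition quasi_isometry ::
  "real \<Rightarrow> real \<Rightarrow> ('a \<Rightarrow> 'a \<Rightarrow> real) \<Rightarrow> ('b \<Rightarrow> 'b \<Rightarrow> real) \<Rightarrow> ('a \<Rightarrow> 'b) \<Rightarrow> bool" where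
  "quasi_isometry C A dZ dW g \<longleftrightarrow>
     (\<forall>z z'. inverse C * dZ z z' - A \<le> dW (g z) (g z') \<and> dW (g z) (g z') \<le> C * dZ z z' + A) \<and>
     {w. \<exists>z. dW w (g z) \<le> A} = UNIV"

definition free_cont_action :: "('g, 'b) monoid_scheme \<Rightarrow> ('g \<Rightarrow> 'y::metric_space \<Rightarrow> 'y) \<Rightarrow> bool" where
  "free_cont_action G \<phi> \<longleftrightarrow> group_action G UNIV \<phi> \<and>
     (\<forall>g\<in>carrier G. continuous_on UNIV (\<phi> g)) \<and>
     (\<forall>g\<in>carrier G. \<forall>y. \<phi> g y = y \<longrightarrow> g = \<one>\<^bsub>G\<^esub>)"

end

theory Submission imports Defs begin

locale wcone = group G for G :: "('g, 'b) monoid_scheme" (structure) +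
  fixes S :: "'g set" and \<phi> :: "'g \<Rightarrow> 'y::metric_space \<Rightarrow> 'y"
  assumes gen: "fin_sym_gen_set G S" and act: "group_action G UNIV \<phi>"
    and cont: "\<forall>g\<in>carrier G. continuous_on UNIV (\<phi> g)" and cpt: "compact (UNIV::'y set)"
begin

lemma S_carrier: "S \<subseteq> carrier G" and S_inv: "s\<in>S \<Longrightarrow> inv s \<in> S"
  and gen_eq: "generate G S = carrier G" and S_fin: "finite S"
  using gen unfolding fin_sym_gen_set_def by auto

lemma act_one: "\<phi> \<one> y = y"
  proof -
  have "(\<lambda>x \<in> UNIV. x) y = \<phi> \<one> y" using group_action.id_eq_one[OF act] by simp
  then show ?thesis by simp
qed

lemma act_mult: "g1 \<in> carrier G \<Longrightarrow> g2 \<in> carrier G \<Longrightarrow> \<phi> (g1 \<otimes> g2) y = \<phi> g1 (\<phi> g2 y)"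
  using group_action.composition_rule[OF act] by blast

lemma foldr_closed: "set ws \<subseteq> carrier G \<Longrightarrow> foldr (\<otimes>) ws \<one> \<in> carrier G"
  by (induction ws) auto

lemma foldr_mult: "set xs \<subseteq> carrier G \<Longrightarrow> z \<in> carrier G \<Longrightarrow> foldr (\<otimes>) xs z = foldr (\<otimes>) xs \<one> \<otimes> z"
proof (induction xs)
  case Nil then show ?case by simp
next
  case (Cons x xs)
  then show ?case using foldr_closed by (simp add: m_assoc)
qed

lemma gen_word: "g \<in> generate G S \<Longrightarrow> \<exists>ws. set ws \<subseteq> S \<and> foldr (\<otimes>) ws \<one> = g"
proof (induction rule: generate.induct)
  case one
  then show ?case by (intro exI[of _ "[]"]) simp
next
  case (incl h)
  then show ?case using S_carrier by (intro exI[of _ "[h]"]) auto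
next
  case (inv h)
  then show ?case using S_carrier S_inv by (intro exI[of _ "[inv h]"]) auto
next
  case (eng h1 h2)
  then obtain ws1 ws2 where w: "set ws1 \<subseteq> S" "foldr (\<otimes>) ws1 \<one> = h1" "set ws2 \<subseteq> S" "foldr (\<otimes>) ws2 \<one> = h2"
    by blast
  have "foldr (\<otimes>) (ws1 @ ws2) \<one> = h1 \<otimes> h2"
    using w S_carrier foldr_mult[of ws1 "foldr (\<otimes>) ws2 \<one>"] foldr_closed[of ws2] by auto
  then show ?case using w by (intro exI[of _ "ws1 @ ws2"]) auto
qed

lemma word_exists: "g \<in> carrier G \<Longrightarrow> \<exists>ws. set ws \<subseteq> S \<and> length ws = word_length G S g \<and> foldr (\<otimes>) ws \<one> = g"
proof -
  assume "g \<in> carrier G"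
  then obtain ws where "set ws \<subseteq> S \<and> foldr (\<otimes>) ws \<one> = g" using gen_word gen_eq by blast
  then have "\<exists>n ws. set ws \<subseteq> S \<and> length ws = n \<and> foldr (\<otimes>) ws \<one> = g" by blast
  then show ?thesis unfolding word_length_def by (rule LeastI_ex)
qed

lemma word_le: "set ws \<subseteq> S \<Longrightarrow> word_length G S (foldr (\<otimes>) ws \<one>) \<le> length ws"
  unfolding word_length_def by (rule Least_le) auto

inductive chain :: "'y \<Rightarrow> 'y \<Rightarrow> nat \<Rightarrow> real \<Rightarrow> bool" for a where
  c_refl: "chain a a 0 0"
| c_drift: "chain a b m D \<Longrightarrow> chain a b' m (D + dist b b')"
| c_jump: "chain a b m D \<Longrightarrow> s \<in> S \<Longrightarrow> chain a (\<phi> s b) (Suc m) D"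

lemma chain_nonneg: "chain a b m D \<Longrightarrow> 0 \<le> D"
  by (induction rule: chain.induct) auto

lemma chain_trans: "chain b c m2 D2 \<Longrightarrow> chain a b m1 D1 \<Longrightarrow> chain a c (m1+m2) (D1+D2)"
proof (induction rule: chain.induct)
  case c_refl then show ?case by simp
next
  case (c_drift b' m D b'')
  then show ?case using chain.c_drift[of a b' "m1+m" "D1+D" b''] by (simp add: add.assoc)
next
  case (c_jump b' m D s)
  then show ?case using chain.c_jump[of a b' "m1+m" "D1+D" s] by simp
qed

lemma chain_d: "chain a b 0 (dist a b)"
  using chain.c_drift[OF chain.c_refl, of a b] by simp

lemma chain_back: "s \<in> S \<Longrightarrow> chain (\<phi> s a) a 1 0"
proof -
  assume s: "s \<in> S"
  then have "inv s \<in> S" "s \<in> carrier G" using S_inv S_carrier by auto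
  then have "\<phi> (inv s) (\<phi> s a) = a" using act_mult[of "inv s" s a] act_one by simp
  then show ?thesis using chain.c_jump[OF chain.c_refl[of "\<phi> s a"] \<open>inv s \<in> S\<close>] by simp
qed

lemma chain_sym: "chain a b m D \<Longrightarrow> chain b a m D"
proof (induction rule: chain.induct)
  case c_refl then show ?case by (rule chain.c_refl)
next
  case (c_drift b m D b')
  have "chain b' a (0 + m) (dist b' b + D)" by (rule chain_trans[OF c_drift.IH chain_d])
  then show ?case by (simp add: dist_commute add.commute)
next
  case (c_jump b m D s)
  have "chain (\<phi> s b) a (1 + m) (0 + D)" by (rule chain_trans[OF c_jump.IH chain_back[OF c_jump.hyps(2)]])
  then show ?case by simp
qed

lemma chain_zero: "chain a b m D \<Longrightarrow> m = 0 \<Longrightarrow> dist a b \<le> D"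
proof (induction rule: chain.induct)
  case c_refl then show ?case by simp
next
  case (c_drift b m D b')
  then show ?case using dist_triangle[of a b' b] by simp
next
  case (c_jump b m D s) then show ?case by simp
qed

lemma chain_decomp: "chain a b n D \<Longrightarrow> n = Suc m \<Longrightarrow>
   \<exists>c s D1 D2. chain a c m D1 \<and> s \<in> S \<and> dist (\<phi> s c) b \<le> D2 \<and> D1 + D2 \<le> D"
proof (induction arbitrary: m rule: chain.induct)
  case c_refl then show ?case by simp
next
  case (c_drift b k D b')
  then obtain c s D1 D2 where h: "chain a c m D1" "s \<in> S" "dist (\<phi> s c) b \<le> D2" "D1 + D2 \<le> D" by blast
  have "dist (\<phi> s c) b' \<le> D2 + dist b b'" using h(3) dist_triangle[of "\<phi> s c" b' b] by simp
  then show ?case using h by (intro exI[of _ c] exI[of _ s] exI[of _ D1] exI[of _ "D2 + dist b b'"]) auto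
next
  case (c_jump b k D s)
  then show ?case by (intro exI[of _ b] exI[of _ s] exI[of _ D] exI[of _ 0]) auto
qed

definition pm :: "real \<Rightarrow> 'y \<Rightarrow> 'y \<Rightarrow> real" where
  "pm t a b = Inf {real m + t * D | m D. chain a b m D}"

lemma pm_set_ne: "{real m + t * D | m D. chain a b m D} \<noteq> {}"
  using chain_d by blast

lemma pm_set_bdd: "0 \<le> t \<Longrightarrow> bdd_below {real m + t * D | m D. chain a b m D}"
  unfolding bdd_below_def using chain_nonneg by (intro exI[of _ 0]) auto

lemma pm_le: "0 \<le> t \<Longrightarrow> chain a b m D \<Longrightarrow> pm t a b \<le> real m + t * D"
  unfolding pm_def by (rule cInf_lower[OF _ pm_set_bdd]) auto

lemma pm_nonneg: "0 \<le> t \<Longrightarrow> 0 \<le> pm t a b"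
  unfolding pm_def apply (rule cInf_greatest[OF pm_set_ne]) using chain_nonneg by (auto intro!: add_nonneg_nonneg mult_nonneg_nonneg)

lemma pm_sym: "pm t a b = pm t b a"
proof -
  have "{real m + t * D | m D. chain a b m D} = {real m + t * D | m D. chain b a m D}"
    using chain_sym by blast
  then show ?thesis unfolding pm_def by simp
qed

lemma pm_tri: assumes t: "0 \<le> t" shows "pm t a c \<le> pm t a b + pm t b c"
proof -
  have 1: "pm t a c - y \<le> x" if hx: "x \<in> {real m + t * D | m D. chain a b m D}"
      and hy: "y \<in> {real m + t * D | m D. chain b c m D}" for x y
  proof -
    obtain m1 D1 m2 D2 where h: "x = real m1 + t * D1" "chain a b m1 D1" "y = real m2 + t * D2" "chain b c m2 D2"
      using hx hy by blast
    have "pm t a c \<le> real (m1 + m2) + t * (D1 + D2)"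
      by (rule pm_le[OF t chain_trans[OF h(4) h(2)]])
    then show ?thesis using h by (simp add: algebra_simps)
  qed
  have 2: "pm t a c - y \<le> pm t a b" if "y \<in> {real m + t * D | m D. chain b c m D}" for y
    unfolding pm_def[of t a b] by (rule cInf_greatest[OF pm_set_ne]) (use 1 that in blast)
  have "pm t a c - pm t a b \<le> pm t b c"
    unfolding pm_def[of t b c] by (rule cInf_greatest[OF pm_set_ne]) (use 2 in force)
  then show ?thesis by simp
qed

lemma pm_refl: "0 \<le> t \<Longrightarrow> pm t a a = 0"
  using pm_le[OF _ chain.c_refl, of t a] pm_nonneg[of t a a] by simp

lemma pm_pos: assumes t: "0 < t" and "pm t a b = 0" shows "a = b"
proof (rule ccontr)
  assume "a \<noteq> b"
  define e where "e = min 1 (t * dist a b)"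
  have "e > 0" using \<open>a \<noteq> b\<close> t by (simp add: e_def)
  then have "Inf {real m + t * D | m D. chain a b m D} < e" using assms pm_def by simp
  then obtain x where "x \<in> {real m + t * D | m D. chain a b m D}" "x < e"
    using cInf_lessD[OF pm_set_ne] by blast
  then obtain m D where h: "chain a b m D" "real m + t * D < e" by blast
  have "0 \<le> D" using chain_nonneg h(1) by simp
  have "t * D \<ge> 0" using t \<open>0 \<le> D\<close> by simp
  moreover have "e \<le> 1" by (simp add: e_def)
  ultimately have "real m < 1" using h(2) by linarith
  then have "m = 0" by simp
  then have "dist a b \<le> D" using chain_zero h(1) by simp
  then have "t * dist a b \<le> t * D" using t by simp
  then show False using h(2) \<open>m = 0\<close> e_def by simp
qed

lemma pm_admissible: assumes t: "0 < t"
  shows "is_metric (pm t) \<and> (\<forall>a b. pm t a b \<le> t * dist a b) \<and> (\<forall>s\<in>S. \<forall>a. pm t a (\<phi> s a) \<le> 1)"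
proof -
  have t0: "0 \<le> t" using t by simp
  have "is_metric (pm t)" unfolding is_metric_def
  proof (intro conjI allI)
    fix a b show "0 \<le> pm t a b" using pm_nonneg[OF t0] .
    show "pm t a b = 0 \<longleftrightarrow> a = b" using pm_pos[OF t] pm_refl[OF t0] by blast
    show "pm t a b = pm t b a" by (rule pm_sym)
  next
    fix a b c show "pm t a c \<le> pm t a b + pm t b c" by (rule pm_tri[OF t0])
  qed
  moreover have "pm t a b \<le> t * dist a b" for a b using pm_le[OF _ chain_d, of t a b] t by simp
  moreover have "pm t a (\<phi> s a) \<le> 1" if "s \<in> S" for s a
    using pm_le[OF _ chain.c_jump[OF chain.c_refl that], of t] t by simp
  ultimately show ?thesis by blast
qed

lemma wd_set_bdd: "bdd_above {\<rho> y y' | \<rho>. is_metric \<rho> \<and> (\<forall>a b. \<rho> a b \<le> t * dist a b) \<and>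
                        (\<forall>s\<in>S. \<forall>a. \<rho> a (\<phi> s a) \<le> 1)}"
  unfolding bdd_above_def by (intro exI[of _ "t * dist y y'"]) auto

lemma pm_le_wd: "0 < t \<Longrightarrow> pm t y y' \<le> warped_dist S \<phi> t y y'"
  unfolding warped_dist_def by (rule cSup_upper[OF _ wd_set_bdd]) (use pm_admissible in blast)

lemma metric_word: assumes "is_metric \<rho>" "\<forall>s\<in>S. \<forall>a. \<rho> a (\<phi> s a) \<le> 1" "set ws \<subseteq> S"
  shows "\<rho> y (\<phi> (foldr (\<otimes>) ws \<one>) y) \<le> real (length ws)"
  using assms(3)
proof (induction ws)
  case Nil
  have "\<rho> y y = 0" using assms(1) unfolding is_metric_def by blast
  then show ?case using act_one by simp
next
  case (Cons s ws)
  let ?w = "foldr (\<otimes>) ws \<one>"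
  have c: "?w \<in> carrier G" "s \<in> carrier G" using Cons.prems S_carrier foldr_closed by auto
  have "\<rho> y (\<phi> (s \<otimes> ?w) y) \<le> \<rho> y (\<phi> ?w y) + \<rho> (\<phi> ?w y) (\<phi> s (\<phi> ?w y))"
    using assms(1) act_mult[OF c(2) c(1)] unfolding is_metric_def by simp
  also have "\<dots> \<le> real (length ws) + 1"
  proof -
    have "s \<in> S" "set ws \<subseteq> S" using Cons.prems by auto
    then have "\<rho> y (\<phi> ?w y) \<le> real (length ws)" "\<rho> (\<phi> ?w y) (\<phi> s (\<phi> ?w y)) \<le> 1"
      using Cons.IH assms(2) by auto
    then show ?thesis by linarith
  qed
  finally show ?case by simp
qed

lemma wd_word: assumes "0 < t" "g \<in> carrier G" shows "warped_dist S \<phi> t y (\<phi> g y) \<le> real (word_length G S g)"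
proof -
  obtain ws where w: "set ws \<subseteq> S" "length ws = word_length G S g" "foldr (\<otimes>) ws \<one> = g"
    using word_exists assms(2) by blast
  show ?thesis unfolding warped_dist_def
    apply (rule cSup_least)
    using pm_admissible[OF assms(1)] apply blast
    using metric_word[OF _ _ w(1)] w by auto
qed

lemma unif: assumes "0 < e" shows "\<exists>d>0. \<forall>s\<in>S. \<forall>x y. dist x y < d \<longrightarrow> dist (\<phi> s x) (\<phi> s y) < e"
proof -
  have "\<forall>s\<in>S. \<exists>d>0. \<forall>x y. dist x y < d \<longrightarrow> dist (\<phi> s x) (\<phi> s y) < e"
  proof
    fix s assume "s \<in> S"
    then have "uniformly_continuous_on UNIV (\<phi> s)"
      using cont S_carrier cpt compact_uniformly_continuous by blast
    then show "\<exists>d>0. \<forall>x y. dist x y < d \<longrightarrow> dist (\<phi> s x) (\<phi> s y) < e"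
    proof -
      obtain d where "d>0" "\<forall>x\<in>UNIV. \<forall>x'\<in>UNIV. dist x' x < d \<longrightarrow> dist (\<phi> s x') (\<phi> s x) < e"
        using assms \<open>uniformly_continuous_on UNIV (\<phi> s)\<close> unfolding uniformly_continuous_on_def by blast
      then show ?thesis by blast
    qed
  qed
  from bchoice[OF this] obtain d where d: "\<forall>s\<in>S. d s > 0 \<and> (\<forall>x y. dist x y < d s \<longrightarrow> dist (\<phi> s x) (\<phi> s y) < e)"
    by blast
  show ?thesis
  proof (cases "S = {}")
    case True then show ?thesis by (intro exI[of _ 1]) auto
  next
    case False
    define d0 where "d0 = Min (d ` S)"
    have "d0 > 0" using False S_fin d by (simp add: d0_def)
    moreover have "d0 \<le> d s" if "s \<in> S" for s using S_fin that by (simp add: d0_def)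
    ultimately show ?thesis using d by (intro exI[of _ d0]) force
  qed
qed

lemma approx: "0 < \<epsilon> \<Longrightarrow> \<exists>\<eta>>0. \<forall>a b m' D. m' \<le> m \<longrightarrow> chain a b m' D \<longrightarrow> D \<le> \<eta> \<longrightarrow>
   (\<exists>ws. set ws \<subseteq> S \<and> length ws \<le> m \<and> dist b (\<phi> (foldr (\<otimes>) ws \<one>) a) \<le> \<epsilon>)"
proof (induction m arbitrary: \<epsilon>)
  case 0
  show ?case
  proof (intro exI[of _ \<epsilon>] conjI allI impI)
    fix a b m' D assume h: "m' \<le> 0" "chain a b m' D" "D \<le> \<epsilon>"
    have "dist a b \<le> D" using chain_zero[OF h(2)] h(1) by simp
    then have "dist a b \<le> \<epsilon>" using h(3) by simp
    then show "\<exists>ws. set ws \<subseteq> S \<and> length ws \<le> 0 \<and> dist b (\<phi> (foldr (\<otimes>) ws \<one>) a) \<le> \<epsilon>"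
      by (intro exI[of _ "[]"]) (simp add: act_one dist_commute)
  qed (use 0 in simp)
next
  case (Suc m)
  obtain d where d: "d > 0" "\<forall>s\<in>S. \<forall>x y. dist x y < d \<longrightarrow> dist (\<phi> s x) (\<phi> s y) < \<epsilon>/2"
    using unif[of "\<epsilon>/2"] Suc.prems by auto
  obtain \<eta>' where e': "\<eta>' > 0" "\<forall>a b m' D. m' \<le> m \<longrightarrow> chain a b m' D \<longrightarrow> D \<le> \<eta>' \<longrightarrow>
   (\<exists>ws. set ws \<subseteq> S \<and> length ws \<le> m \<and> dist b (\<phi> (foldr (\<otimes>) ws \<one>) a) \<le> d/2)"
    using Suc.IH[of "d/2"] d(1) by auto
  show ?case
  proof (intro exI[of _ "min \<eta>' (\<epsilon>/2)"] conjI allI impI)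
    show "0 < min \<eta>' (\<epsilon>/2)" using e'(1) Suc.prems by simp
  next
    fix a b m' D assume h: "m' \<le> Suc m" "chain a b m' D" "D \<le> min \<eta>' (\<epsilon>/2)"
    show "\<exists>ws. set ws \<subseteq> S \<and> length ws \<le> Suc m \<and> dist b (\<phi> (foldr (\<otimes>) ws \<one>) a) \<le> \<epsilon>"
    proof (cases m')
      case 0
      have "dist a b \<le> D" using chain_zero[OF h(2) 0] .
      moreover have "D \<le> \<epsilon>/2" using h(3) by simp
      ultimately have "dist a b \<le> \<epsilon>" using Suc.prems by linarith
      then show ?thesis by (intro exI[of _ "[]"]) (simp add: act_one dist_commute)
    next
      case (Suc k)
      then obtain c s D1 D2 where c: "chain a c k D1" "s \<in> S" "dist (\<phi> s c) b \<le> D2" "D1 + D2 \<le> D"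
        using chain_decomp[OF h(2) Suc] by blast
      have "0 \<le> D1" using chain_nonneg c(1) .
      have "0 \<le> D2" using c(3) zero_le_dist[of "\<phi> s c" b] by linarith
      have "D1 \<le> \<eta>'" "D2 \<le> \<epsilon>/2" using c(4) h(3) \<open>0 \<le> D1\<close> \<open>0 \<le> D2\<close> by auto
      have "k \<le> m" using Suc h(1) by simp
      note ex = e'(2)[rule_format, OF \<open>k \<le> m\<close> c(1) \<open>D1 \<le> \<eta>'\<close>]
      obtain ws where ws: "set ws \<subseteq> S" "length ws \<le> m" "dist c (\<phi> (foldr (\<otimes>) ws \<one>) a) \<le> d/2"
        using ex by blast
      let ?w = "foldr (\<otimes>) ws \<one>"
      have wc: "?w \<in> carrier G" "s \<in> carrier G" using ws(1) c(2) S_carrier foldr_closed by auto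
      have "dist c (\<phi> ?w a) < d" using ws(3) d(1) by simp
      then have 1: "dist (\<phi> s c) (\<phi> s (\<phi> ?w a)) < \<epsilon>/2" using d(2) c(2) by blast
      have 2: "dist b (\<phi> s (\<phi> ?w a)) \<le> dist b (\<phi> s c) + dist (\<phi> s c) (\<phi> s (\<phi> ?w a))"
        by (rule dist_triangle)
      have 3: "dist b (\<phi> s c) \<le> \<epsilon>/2" using c(3) \<open>D2 \<le> \<epsilon>/2\<close> by (simp add: dist_commute)
      have "dist b (\<phi> s (\<phi> ?w a)) \<le> \<epsilon>" using 1 2 3 by linarith
      then have "dist b (\<phi> (s \<otimes> ?w) a) \<le> \<epsilon>" using act_mult[OF wc(2) wc(1)] by simp
      then show ?thesis using ws c(2) by (intro exI[of _ "s # ws"]) auto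
    qed
  qed
qed

lemma key: assumes "\<forall>T0. \<exists>t\<ge>T0. 0 < t \<and> warped_dist S \<phi> t a b \<le> K"
  shows "\<exists>g\<in>carrier G. b = \<phi> g a \<and> real (word_length G S g) \<le> K + 2"
proof -
  have K0: "0 \<le> K"
  proof -
    obtain t where "0 < t" "warped_dist S \<phi> t a b \<le> K" using assms by blast
    then show ?thesis using pm_nonneg[of t a b] pm_le_wd[of t a b] by linarith
  qed
  define N where "N = nat \<lceil>K\<rceil> + 1"
  have N: "real N \<le> K + 2" using K0 unfolding N_def by linarith
  define W where "W = {ws. set ws \<subseteq> S \<and> length ws \<le> N}"
  have "finite W" unfolding W_def using finite_lists_length_le[OF S_fin] by simp
  define F where "F = (\<lambda>ws. \<phi> (foldr (\<otimes>) ws \<one>) a) ` W"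
  have "finite F" using \<open>finite W\<close> F_def by simp
  have "b \<in> closure F"
    unfolding closure_approachable
  proof (intro allI impI)
    fix e :: real assume "0 < e"
    obtain \<eta> where e: "\<eta> > 0" "\<forall>a b m' D. m' \<le> N \<longrightarrow> chain a b m' D \<longrightarrow> D \<le> \<eta> \<longrightarrow>
      (\<exists>ws. set ws \<subseteq> S \<and> length ws \<le> N \<and> dist b (\<phi> (foldr (\<otimes>) ws \<one>) a) \<le> e/2)"
      using approx[of "e/2" N] \<open>0 < e\<close> by auto
    obtain t where t: "t \<ge> (K+1)/\<eta>" "0 < t" "warped_dist S \<phi> t a b \<le> K" using assms by blast
    have "pm t a b < K + 1" using pm_le_wd[OF t(2), of a b] t(3) by simp
    then obtain x where "x \<in> {real m + t * D | m D. chain a b m D}" "x < K + 1"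
      using cInf_lessD[OF pm_set_ne] unfolding pm_def by blast
    then obtain m D where h: "chain a b m D" "real m + t * D < K + 1" by blast
    have "0 \<le> D" using chain_nonneg h(1) .
    then have "0 \<le> t * D" using t(2) by simp
    then have "real m < K + 1" using h(2) by linarith
    then have "m \<le> N" unfolding N_def using K0 by linarith
    have "t * D < K + 1" using h(2) by simp
    moreover have "K + 1 \<le> t * \<eta>" using t(1) e(1) by (simp add: pos_divide_le_eq)
    ultimately have "t * D < t * \<eta>" by linarith
    then have "D \<le> \<eta>" using mult_less_cancel_left_pos[OF t(2)] by simp
    then obtain ws where ws: "set ws \<subseteq> S" "length ws \<le> N" "dist b (\<phi> (foldr (\<otimes>) ws \<one>) a) \<le> e/2"
      using e(2) h(1) \<open>m \<le> N\<close> by blast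
    then show "\<exists>y\<in>F. dist y b < e" using \<open>0 < e\<close> unfolding F_def W_def
      by (intro bexI[of _ "\<phi> (foldr (\<otimes>) ws \<one>) a"]) (auto simp: dist_commute)
  qed
  moreover have "closure F = F" using \<open>finite F\<close> finite_imp_closed closure_closed by blast
  ultimately have "b \<in> F" by simp
  then obtain ws where ws: "set ws \<subseteq> S" "length ws \<le> N" "b = \<phi> (foldr (\<otimes>) ws \<one>) a"
    unfolding F_def W_def by blast
  have "real (word_length G S (foldr (\<otimes>) ws \<one>)) \<le> real N"
    using word_le[OF ws(1)] ws(2) by simp
  then show ?thesis using ws N S_carrier foldr_closed[of ws]
    by (intro bexI[of _ "foldr (\<otimes>) ws \<one>"]) auto
qed

lemma free_uniq: assumes "\<forall>g\<in>carrier G. \<forall>y. \<phi> g y = y \<longrightarrow> g = \<one>"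
  and "g1 \<in> carrier G" "g2 \<in> carrier G" "\<phi> g1 x = \<phi> g2 x" shows "g1 = g2"
proof -
  have ic: "inv g2 \<in> carrier G" using assms(3) by (rule inv_closed)
  have "\<phi> (inv g2 \<otimes> g1) x = \<phi> (inv g2) (\<phi> g1 x)" by (rule act_mult[OF ic assms(2)])
  also have "\<dots> = \<phi> (inv g2) (\<phi> g2 x)" using assms(4) by simp
  also have "\<dots> = \<phi> (inv g2 \<otimes> g2) x" by (rule act_mult[OF ic assms(3), symmetric])
  also have "\<dots> = x" using assms(3) act_one by simp
  finally have e: "\<phi> (inv g2 \<otimes> g1) x = x" .
  have "inv g2 \<otimes> g1 \<in> carrier G" using ic assms(2) by (rule m_closed)
  then have "inv g2 \<otimes> g1 = \<one>" using assms(1) e by blast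
  then have "inv g1 = inv g2" by (rule inv_equality[OF _ assms(2) ic])
  then have "inv (inv g1) = inv (inv g2)" by simp
  then show ?thesis using assms(2,3) by simp
qed

end

theorem corollary4p7:
  fixes \<Gamma> :: "('g, 'b) monoid_scheme" and \<Delta> :: "('h, 'c) monoid_scheme"
    and S :: "'g set" and T :: "'h set"
    and \<phi> :: "'g \<Rightarrow> 'y::metric_space \<Rightarrow> 'y" and \<psi> :: "'h \<Rightarrow> 'x::metric_space \<Rightarrow> 'x"
    and f :: "'y \<Rightarrow> 'x" and I :: "'i set" and t \<tau> :: "'i \<Rightarrow> real" and C A :: real
  assumes "group \<Gamma>" and "group \<Delta>"
    and "fin_sym_gen_set \<Gamma> S" and "fin_sym_gen_set \<Delta> T"
    and "compact (UNIV :: 'y set)" and "compact (UNIV :: 'x set)"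
    and "free_cont_action \<Gamma> \<phi>" and "free_cont_action \<Delta> \<psi>"
    and "bij f"
    and "t ` I = {0<..}" and "\<tau> ` I = {0<..}"
    and "C \<ge> 1" and "A \<ge> 0"
    and "\<forall>i\<in>I. quasi_isometry C A (warped_dist S \<phi> (t i)) (warped_dist T \<psi> (\<tau> i)) f"
  shows "\<exists>\<delta> :: 'g \<Rightarrow> 'y \<Rightarrow> 'h.
           (\<forall>\<gamma>1\<in>carrier \<Gamma>. \<forall>\<gamma>2\<in>carrier \<Gamma>. \<forall>y.
              \<delta> \<gamma>2 (\<phi> \<gamma>1 y) \<otimes>\<^bsub>\<Delta>\<^esub> \<delta> \<gamma>1 y = \<delta> (\<gamma>2 \<otimes>\<^bsub>\<Gamma>\<^esub> \<gamma>1) y) \<and>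
           (\<forall>y. bij_betw (\<lambda>\<gamma>. \<delta> \<gamma> y) (carrier \<Gamma>) (carrier \<Delta>)) \<and>
           (\<exists>C' A'. C' \<ge> 1 \<and> A' \<ge> 0 \<and>
              (\<forall>\<gamma>\<in>carrier \<Gamma>. \<forall>y.
                 inverse C' * real (word_length \<Gamma> S \<gamma>) - A' \<le> real (word_length \<Delta> T (\<delta> \<gamma> y)) \<and>
                 real (word_length \<Delta> T (\<delta> \<gamma> y)) \<le> C' * real (word_length \<Gamma> S \<gamma>) + A'))"
proof -
  note fa = assms(7)[unfolded free_cont_action_def] and fb = assms(8)[unfolded free_cont_action_def]
  interpret Y: wcone \<Gamma> S \<phi>
    by (rule wcone.intro[OF assms(1)], unfold wcone_axioms_def) (use assms(3,5) fa in blast)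
  interpret X: wcone \<Delta> T \<psi>
    by (rule wcone.intro[OF assms(2)], unfold wcone_axioms_def) (use assms(4,6) fb in blast)
  have FY: "\<forall>g\<in>carrier \<Gamma>. \<forall>y. \<phi> g y = y \<longrightarrow> g = \<one>\<^bsub>\<Gamma>\<^esub>" using fa by blast
  have FX: "\<forall>g\<in>carrier \<Delta>. \<forall>y. \<psi> g y = y \<longrightarrow> g = \<one>\<^bsub>\<Delta>\<^esub>" using fb by blast
  have tpos: "0 < t i" "0 < \<tau> i" if "i \<in> I" for i using assms(10,11) that by auto
  have tex: "\<exists>i\<in>I. t i = r" if "0 < r" for r proof -
    have "r \<in> t ` I" using assms(10) that by simp
    then show ?thesis by blast
  qed
  have \<tau>ex: "\<exists>i\<in>I. \<tau> i = r" if "0 < r" for r proof -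
    have "r \<in> \<tau> ` I" using assms(11) that by simp
    then show ?thesis by blast
  qed
  have qi: "inverse C * warped_dist S \<phi> (t i) z z' - A \<le> warped_dist T \<psi> (\<tau> i) (f z) (f z')"
    "warped_dist T \<psi> (\<tau> i) (f z) (f z') \<le> C * warped_dist S \<phi> (t i) z z' + A"
    if "i \<in> I" for i z z'
  proof -
    have "quasi_isometry C A (warped_dist S \<phi> (t i)) (warped_dist T \<psi> (\<tau> i)) f"
      using assms(14) that by blast
    note q = conjunct1[OF this[unfolded quasi_isometry_def], rule_format, of z z']
    show "inverse C * warped_dist S \<phi> (t i) z z' - A \<le> warped_dist T \<psi> (\<tau> i) (f z) (f z')"
      using q by (rule conjunct1)
    show "warped_dist T \<psi> (\<tau> i) (f z) (f z') \<le> C * warped_dist S \<phi> (t i) z z' + A"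
      using q by (rule conjunct2)
  qed
  have C0: "0 < C" using assms(12) by simp
  have stepA: "\<exists>d\<in>carrier \<Delta>. f (\<phi> g y) = \<psi> d (f y) \<and>
      real (word_length \<Delta> T d) \<le> C * real (word_length \<Gamma> S g) + A + 2"
    if g: "g \<in> carrier \<Gamma>" for g y
  proof -
    have "\<forall>T0. \<exists>r\<ge>T0. 0 < r \<and> warped_dist T \<psi> r (f y) (f (\<phi> g y)) \<le> C * real (word_length \<Gamma> S g) + A"
    proof
      fix T0 :: real
      have "0 < max T0 (1::real)" by simp
      then obtain i where i: "i \<in> I" "\<tau> i = max T0 1" using \<tau>ex[of "max T0 1"] by blast
      have "warped_dist S \<phi> (t i) y (\<phi> g y) \<le> real (word_length \<Gamma> S g)"
        using Y.wd_word[OF tpos(1)[OF i(1)] g] .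
      then have "C * warped_dist S \<phi> (t i) y (\<phi> g y) \<le> C * real (word_length \<Gamma> S g)"
        using C0 by simp
      then have "warped_dist T \<psi> (\<tau> i) (f y) (f (\<phi> g y)) \<le> C * real (word_length \<Gamma> S g) + A"
        using qi(2)[OF i(1), of y "\<phi> g y"] by linarith
      then show "\<exists>r\<ge>T0. 0 < r \<and> warped_dist T \<psi> r (f y) (f (\<phi> g y)) \<le> C * real (word_length \<Gamma> S g) + A"
        using i by (intro exI[of _ "\<tau> i"]) auto
    qed
    from X.key[OF this] show ?thesis by simp
  qed
  have stepB: "\<exists>g\<in>carrier \<Gamma>. f (\<phi> g y) = \<psi> d (f y) \<and>
      real (word_length \<Gamma> S g) \<le> C * (real (word_length \<Delta> T d) + A) + 2"
    if d: "d \<in> carrier \<Delta>" for d y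
  proof -
    define y' where "y' = inv_into UNIV f (\<psi> d (f y))"
    have fy': "f y' = \<psi> d (f y)" unfolding y'_def using assms(9) by (simp add: bij_is_surj surj_f_inv_f)
    have "\<forall>T0. \<exists>r\<ge>T0. 0 < r \<and> warped_dist S \<phi> r y y' \<le> C * (real (word_length \<Delta> T d) + A)"
    proof
      fix T0 :: real
      have "0 < max T0 (1::real)" by simp
      then obtain i where i: "i \<in> I" "t i = max T0 1" using tex[of "max T0 1"] by blast
      have "warped_dist T \<psi> (\<tau> i) (f y) (f y') \<le> real (word_length \<Delta> T d)"
        using X.wd_word[OF tpos(2)[OF i(1)] d] fy' by simp
      then have "inverse C * warped_dist S \<phi> (t i) y y' \<le> real (word_length \<Delta> T d) + A"
        using qi(1)[OF i(1), of y y'] by linarith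
      then have "C * (inverse C * warped_dist S \<phi> (t i) y y') \<le> C * (real (word_length \<Delta> T d) + A)"
        using C0 by (intro mult_left_mono) auto
      then have "warped_dist S \<phi> (t i) y y' \<le> C * (real (word_length \<Delta> T d) + A)"
        using C0 by (simp add: mult.assoc[symmetric])
      then show "\<exists>r\<ge>T0. 0 < r \<and> warped_dist S \<phi> r y y' \<le> C * (real (word_length \<Delta> T d) + A)"
        using i by (intro exI[of _ "t i"]) auto
    qed
    from Y.key[OF this] obtain g where "g \<in> carrier \<Gamma>" "y' = \<phi> g y"
      "real (word_length \<Gamma> S g) \<le> C * (real (word_length \<Delta> T d) + A) + 2" by blast
    then show ?thesis using fy' by blast
  qed
  have uX: "d1 = d2" if "d1 \<in> carrier \<Delta>" "d2 \<in> carrier \<Delta>" "\<psi> d1 x = \<psi> d2 x" for d1 d2 x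
    using X.free_uniq[OF FX that] .
  have uY: "g1 = g2" if "g1 \<in> carrier \<Gamma>" "g2 \<in> carrier \<Gamma>" "\<phi> g1 x = \<phi> g2 x" for g1 g2 x
    using Y.free_uniq[OF FY that] .
  have "inj f" using assms(9) by (rule bij_is_inj)
  then have finj: "\<And>a b. f a = f b \<Longrightarrow> a = b" by (simp add: inj_eq)
  define D where "D g y = (THE d. d \<in> carrier \<Delta> \<and> f (\<phi> g y) = \<psi> d (f y))" for g y
  have Dp: "D g y \<in> carrier \<Delta> \<and> f (\<phi> g y) = \<psi> (D g y) (f y)" if gc: "g \<in> carrier \<Gamma>" for g y
  proof -
    have "\<exists>!d. d \<in> carrier \<Delta> \<and> f (\<phi> g y) = \<psi> d (f y)"
    proof -
      obtain d where d: "d \<in> carrier \<Delta>" "f (\<phi> g y) = \<psi> d (f y)" using stepA[OF gc, of y] by blast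
      show ?thesis
      proof (rule ex1I[of _ d])
        show "d \<in> carrier \<Delta> \<and> f (\<phi> g y) = \<psi> d (f y)" using d by simp
        fix d' assume a: "d' \<in> carrier \<Delta> \<and> f (\<phi> g y) = \<psi> d' (f y)"
        have e: "\<psi> d' (f y) = \<psi> d (f y)" using trans[OF sym[OF conjunct2[OF a]] d(2)] .
        show "d' = d" using uX[OF conjunct1[OF a] d(1) e] .
      qed
    qed
    then show ?thesis unfolding D_def by (rule theI')
  qed
  have Du: "D g y = d" if "g \<in> carrier \<Gamma>" "d \<in> carrier \<Delta>" "f (\<phi> g y) = \<psi> d (f y)" for g y d
  proof -
    have e: "\<psi> (D g y) (f y) = \<psi> d (f y)" using trans[OF sym[OF conjunct2[OF Dp[OF that(1), of y]]] that(3)] .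
    show ?thesis using uX[OF conjunct1[OF Dp[OF that(1), of y]] that(2) e] .
  qed
  show ?thesis
  proof (intro exI[of _ D] conjI allI ballI)
    fix g1 g2 y assume g: "g1 \<in> carrier \<Gamma>" "g2 \<in> carrier \<Gamma>"
    have m: "D g2 (\<phi> g1 y) \<otimes>\<^bsub>\<Delta>\<^esub> D g1 y \<in> carrier \<Delta>" using Dp g by simp
    have "f (\<phi> (g2 \<otimes>\<^bsub>\<Gamma>\<^esub> g1) y) = f (\<phi> g2 (\<phi> g1 y))" using Y.act_mult g by simp
    also have "\<dots> = \<psi> (D g2 (\<phi> g1 y)) (\<psi> (D g1 y) (f y))" using Dp g by simp
    also have "\<dots> = \<psi> (D g2 (\<phi> g1 y) \<otimes>\<^bsub>\<Delta>\<^esub> D g1 y) (f y)" using X.act_mult Dp g by simp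
    finally have eq: "f (\<phi> (g2 \<otimes>\<^bsub>\<Gamma>\<^esub> g1) y) = \<psi> (D g2 (\<phi> g1 y) \<otimes>\<^bsub>\<Delta>\<^esub> D g1 y) (f y)" .
    from Du[OF Y.m_closed[OF g(2) g(1)] m eq]
    show "D g2 (\<phi> g1 y) \<otimes>\<^bsub>\<Delta>\<^esub> D g1 y = D (g2 \<otimes>\<^bsub>\<Gamma>\<^esub> g1) y" by simp
  next
    fix y
    show "bij_betw (\<lambda>\<gamma>. D \<gamma> y) (carrier \<Gamma>) (carrier \<Delta>)"
      unfolding bij_betw_def
    proof
      show "inj_on (\<lambda>\<gamma>. D \<gamma> y) (carrier \<Gamma>)"
      proof (rule inj_onI)
        fix g1 g2 assume h: "g1 \<in> carrier \<Gamma>" "g2 \<in> carrier \<Gamma>" "D g1 y = D g2 y"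
        then have "f (\<phi> g1 y) = f (\<phi> g2 y)" using Dp[OF h(1), of y] Dp[OF h(2), of y] h(3) by simp
        then have "\<phi> g1 y = \<phi> g2 y" by (rule finj)
        then show "g1 = g2" by (rule uY[OF h(1) h(2)])
      qed
      show "(\<lambda>\<gamma>. D \<gamma> y) ` carrier \<Gamma> = carrier \<Delta>"
      proof
        show "(\<lambda>\<gamma>. D \<gamma> y) ` carrier \<Gamma> \<subseteq> carrier \<Delta>" using Dp by auto
        show "carrier \<Delta> \<subseteq> (\<lambda>\<gamma>. D \<gamma> y) ` carrier \<Gamma>"
        proof
          fix d assume d: "d \<in> carrier \<Delta>"
          obtain g where "g \<in> carrier \<Gamma>" "f (\<phi> g y) = \<psi> d (f y)" using stepB[OF d, of y] by blast
          then show "d \<in> (\<lambda>\<gamma>. D \<gamma> y) ` carrier \<Gamma>" using Du[OF _ d] by (intro image_eqI[of _ _ g]) auto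
        qed
      qed
    qed
  next
    show "\<exists>C' A'. C' \<ge> 1 \<and> A' \<ge> 0 \<and>
              (\<forall>\<gamma>\<in>carrier \<Gamma>. \<forall>y.
                 inverse C' * real (word_length \<Gamma> S \<gamma>) - A' \<le> real (word_length \<Delta> T (D \<gamma> y)) \<and>
                 real (word_length \<Delta> T (D \<gamma> y)) \<le> C' * real (word_length \<Gamma> S \<gamma>) + A')"
    proof (rule exI[of _ C], rule exI[of _ "A + 2"], intro conjI ballI allI)
      show "1 \<le> C" "0 \<le> A + 2" using assms(12,13) by auto
    next
      fix g y assume g: "g \<in> carrier \<Gamma>"
      obtain d where d: "d \<in> carrier \<Delta>" "f (\<phi> g y) = \<psi> d (f y)"
        "real (word_length \<Delta> T d) \<le> C * real (word_length \<Gamma> S g) + A + 2"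
        using stepA[OF g] by blast
      have "D g y = d" using Du[OF g d(1,2)] .
      then show "real (word_length \<Delta> T (D g y)) \<le> C * real (word_length \<Gamma> S g) + (A + 2)"
        using d(3) by simp
      obtain g' where g': "g' \<in> carrier \<Gamma>" "f (\<phi> g' y) = \<psi> (D g y) (f y)"
        "real (word_length \<Gamma> S g') \<le> C * (real (word_length \<Delta> T (D g y)) + A) + 2"
        using stepB[of "D g y" y] Dp[OF g] by blast
      have "f (\<phi> g' y) = f (\<phi> g y)" using g'(2) Dp[OF g, of y] by simp
      then have "\<phi> g' y = \<phi> g y" by (rule finj)
      then have "g' = g" by (rule uY[OF g'(1) g])
      then have h: "real (word_length \<Gamma> S g) \<le> C * (real (word_length \<Delta> T (D g y)) + A) + 2"
        using g'(3) by simp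
      have "inverse C * real (word_length \<Gamma> S g) \<le> inverse C * (C * (real (word_length \<Delta> T (D g y)) + A) + 2)"
        using h C0 by (intro mult_left_mono) auto
      also have "\<dots> = (inverse C * C) * (real (word_length \<Delta> T (D g y)) + A) + 2 * inverse C"
        by (simp add: distrib_left mult.assoc)
      also have "\<dots> = real (word_length \<Delta> T (D g y)) + A + 2 * inverse C"
        using C0 by simp
      also have "\<dots> \<le> real (word_length \<Delta> T (D g y)) + A + 2"
      proof -
        have "inverse C \<le> 1" using assms(12) by (simp add: inverse_le_1_iff)
        then show ?thesis by simp
      qed
      finally show "inverse C * real (word_length \<Gamma> S g) - (A + 2) \<le> real (word_length \<Delta> T (D g y))"
        by simp
    qed
  qed
qed

end
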